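(* Let $\lambda=(\lambda_1,\dots,\lambda_n)\in\mathbb{R}^n$ with $\lambda_1+\dots+\lambda_n>0$, and suppose there is no partition $\{I_1,I_2\}$ of $\{1,\dots,n\}$ with $s_{I_1}(\lambda)>0$ and $s_{I_2}(\lambda)>0$. Then $|\mathfrak{S}(\lambda)|=(n-1)!$.
   Context: $s_J(\lambda)=\sum_{i\in J}\lambda_i$. $\mathfrak{S}_n$ acts on $\mathbb{R}^n$ by $\sigma(\lambda)=(\lambda_{\sigma^{-1}(1)},\dots,\lambda_{\sigma^{-1}(n)})$. For $\mu\in\mathbb{R}^n$, $\mu>0$ means $\mu_1+\dots+\mu_i>0$ for all $i$. $\mathfrak{S}(\lambda)=\{\sigma\in\mathfrak{S}_n:\sigma(\lambda)>0\}$. *)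

theory Defs
  imports Complex_Main "HOL-Combinatorics.Permutations"
begin

text \<open>Vectors in R^n are modelled as functions nat => real, indexed by {1..n}.\<close>

definition s_sum :: "nat set \<Rightarrow> (nat \<Rightarrow> real) \<Rightarrow> real" where
  "s_sum J lam = (\<Sum>i\<in>J. lam i)"

definition perm_act :: "(nat \<Rightarrow> nat) \<Rightarrow> (nat \<Rightarrow> real) \<Rightarrow> (nat \<Rightarrow> real)" where
  "perm_act \<sigma> lam = (\<lambda>i. lam (inv \<sigma> i))"

definition pos_vec :: "nat \<Rightarrow> (nat \<Rightarrow> real) \<Rightarrow> bool" where
  "pos_vec n mu \<longleftrightarrow> (\<forall>i\<in>{1..n}. (\<Sum>j=1..i. mu j) > 0)"

definition S_set :: "nat \<Rightarrow> (nat \<Rightarrow> real) \<Rightarrow> (nat \<Rightarrow> nat) set" where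
  "S_set n lam = {\<sigma>. \<sigma> permutes {1..n} \<and> pos_vec n (perm_act \<sigma> lam)}"

end

theory Submission
  imports Defs
begin

definition rot :: "nat \<Rightarrow> nat \<Rightarrow> nat \<Rightarrow> nat" where
  "rot n c i = (if 1 \<le> i \<and> i \<le> n then (if i + c \<le> n then i + c else i + c - n) else i)"

lemma rot_permutes:
  assumes "c < n"
  shows "rot n c permutes {1..n}"
proof (rule bij_imp_permutes)
  have inj: "inj_on (rot n c) {1..n}"
    by (rule inj_onI) (auto simp: rot_def split: if_splits)
  have sub: "rot n c ` {1..n} \<subseteq> {1..n}"
    using assms by (auto simp: rot_def)
  have "rot n c ` {1..n} = {1..n}"
    using endo_inj_surj[OF _ sub inj] by simp
  then show "bij_betw (rot n c) {1..n} {1..n}"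
    using inj by (simp add: bij_betw_def)
  show "\<And>x. x \<notin> {1..n} \<Longrightarrow> rot n c x = x"
    by (auto simp: rot_def)
qed

lemma prefix_rot:
  fixes a :: "nat \<Rightarrow> real"
  assumes "c < n"
  shows "i \<le> n \<Longrightarrow> (\<Sum>j=1..i. a (rot n c j)) =
    (if c + i \<le> n then (\<Sum>j=1..c+i. a j) - (\<Sum>j=1..c. a j)
     else (\<Sum>j=1..n. a j) - (\<Sum>j=1..c. a j) + (\<Sum>j=1..c+i-n. a j))"
proof (induction i)
  case 0
  then show ?case using assms by simp
next
  case (Suc i)
  have IH: "(\<Sum>j=1..i. a (rot n c j)) =
    (if c + i \<le> n then (\<Sum>j=1..c+i. a j) - (\<Sum>j=1..c. a j)
     else (\<Sum>j=1..n. a j) - (\<Sum>j=1..c. a j) + (\<Sum>j=1..c+i-n. a j))"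
    using Suc by simp
  have s: "(\<Sum>j=1..Suc i. a (rot n c j)) = (\<Sum>j=1..i. a (rot n c j)) + a (rot n c (Suc i))"
    by simp
  show ?case
  proof (cases "c + Suc i \<le> n")
    case True
    then have "rot n c (Suc i) = Suc (c + i)" by (simp add: rot_def)
    then show ?thesis using True IH s by simp
  next
    case False
    note F = False
    show ?thesis
    proof (cases "c + i = n")
      case True
      then have "rot n c (Suc i) = 1" using Suc.prems by (simp add: rot_def)
      moreover have "c + Suc i - n = Suc 0" using True by simp
      ultimately show ?thesis using True IH s F by simp
    next
      case False
      then have gt: "c + i > n" using F by simp
      then have "rot n c (Suc i) = Suc (c + i - n)" using Suc.prems by (simp add: rot_def)
      moreover have "c + Suc i - n = Suc (c + i - n)" using gt by simp
      ultimately show ?thesis using gt IH s F by simp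
    qed
  qed
qed

lemma split_sum:
  fixes a :: "nat \<Rightarrow> real"
  assumes "m \<le> k"
  shows "(\<Sum>j=1..k. a j) = (\<Sum>j=1..m. a j) + sum a {m+1..k}"
proof -
  obtain p where "k = m + p" using assms le_Suc_ex by blast
  then show ?thesis using sum.ub_add_nat[of 1 m a p] by simp
qed

lemma cycle_lemma:
  fixes a :: "nat \<Rightarrow> real"
  assumes T: "(\<Sum>j=1..n. a j) > 0"
    and ns: "\<forall>J. J \<subseteq> {1..n} \<longrightarrow> J \<noteq> {} \<longrightarrow> J \<noteq> {1..n} \<longrightarrow>
               \<not> (sum a J > 0 \<and> sum a ({1..n} - J) > 0)"
  shows "\<exists>!c. c < n \<and> pos_vec n (\<lambda>j. a (rot n c j))"
proof -
  define P where "P k = (\<Sum>j=1..k. a j)" for k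
  have n1: "n \<ge> 1" using T by (cases n) auto
  have pre: "(\<Sum>j=1..i. a (rot n c j)) =
    (if c + i \<le> n then P (c+i) - P c else P n - P c + P (c+i-n))"
    if "c < n" "i \<le> n" for c i
    using prefix_rot[OF that(1) that(2), of a] by (simp add: P_def)
  have P0: "P 0 = 0" by (simp add: P_def)
  define mn where "mn = Min (P ` {0..<n})"
  define M where "M = {k. k < n \<and> P k = mn}"
  have finM: "finite M" by (simp add: M_def)
  have "mn \<in> P ` {0..<n}" unfolding mn_def using n1 by (intro Min_in) auto
  then have Mne: "M \<noteq> {}" by (auto simp: M_def)
  define m where "m = Max M"
  have mM: "m \<in> M" using Max_in[OF finM Mne] m_def by simp
  have mlt: "m < n" using mM by (simp add: M_def)
  have minall: "P k \<ge> P m" if "k < n" for k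
  proof -
    have "P k \<ge> mn" unfolding mn_def using that by (intro Min_le) auto
    then show ?thesis using mM by (simp add: M_def)
  qed
  have strict: "P k > P m" if "k < n" "k > m" for k
  proof -
    have "k \<notin> M" proof
      assume "k \<in> M"
      then have "k \<le> m" using Max_ge[OF finM] m_def by simp
      then show False using that(2) by linarith
    qed
    then have "P k \<noteq> mn" using that by (simp add: M_def)
    moreover have "P m = mn" using mM by (simp add: M_def)
    ultimately show ?thesis using minall[OF that(1)] by simp
  qed
  have Pn: "P n > 0" using T by (simp add: P_def)
  have Pm0: "P m \<le> 0" using minall[of 0] n1 P0 by simp
  have good: "pos_vec n (\<lambda>j. a (rot n m j))"
    unfolding pos_vec_def
  proof
    fix i assume i: "i \<in> {1..n}"
    show "(\<Sum>j=1..i. a (rot n m j)) > 0"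
    proof (cases "m + i \<le> n")
      case True
      show ?thesis
      proof (cases "m + i = n")
        case True
        then show ?thesis using pre[OF mlt, of i] i Pn Pm0 by simp
      next
        case False
        then show ?thesis using pre[OF mlt, of i] i strict[of "m+i"] True by simp
      qed
    next
      case False
      have "m + i - n < n" using i mlt by auto
      then show ?thesis using pre[OF mlt, of i] i False minall[of "m+i-n"] Pn by simp
    qed
  qed
  have uniq: False if "c < c'" "c' < n" "pos_vec n (\<lambda>j. a (rot n c j))"
    "pos_vec n (\<lambda>j. a (rot n c' j))" for c c'
  proof -
    have "(\<Sum>j=1..c'-c. a (rot n c j)) > 0"
      using that(1,2,3) unfolding pos_vec_def by (metis atLeastAtMost_iff diff_le_self le_trans less_imp_le zero_less_diff Suc_leI One_nat_def)
    then have A: "P c' - P c > 0" using pre[of c "c'-c"] that by simp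
    have "n-c'+c \<in> {1..n}" using that(1,2) by auto
    then have "(\<Sum>j=1..n-c'+c. a (rot n c' j)) > 0"
      using that(4) unfolding pos_vec_def by blast
    moreover have "(\<Sum>j=1..n-c'+c. a (rot n c' j)) = P n - P c' + P c"
    proof -
      have q: "n - c' + c \<le> n" using that by simp
      show ?thesis
      proof (cases "c = 0")
        case True
        then have "c' + (n-c'+c) = n" using that by simp
        then show ?thesis using pre[OF that(2) q] True P0 by simp
      next
        case False
        then have "\<not> c' + (n-c'+c) \<le> n" "c' + (n-c'+c) - n = c" using that by auto
        then show ?thesis using pre[OF that(2) q] by simp
      qed
    qed
    ultimately have B: "P n - P c' + P c > 0" by simp
    define J where "J = {c+1..c'}"
    have sJ: "sum a J = P c' - P c"
      using split_sum[of c c' a] that unfolding J_def P_def by simp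
    have Jsub: "J \<subseteq> {1..n}" using that by (auto simp: J_def)
    have sC: "sum a ({1..n} - J) = P n - sum a J"
      using sum_diff[OF _ Jsub, of a] by (simp add: P_def)
    have "J \<noteq> {}" using that by (auto simp: J_def)
    moreover have "J \<noteq> {1..n}" using that by (auto simp: J_def)
    ultimately have "\<not> (sum a J > 0 \<and> sum a ({1..n} - J) > 0)" using ns Jsub by blast
    then show False using sJ sC A B by linarith
  qed
  show ?thesis
  proof (rule ex1I[of _ m])
    show "m < n \<and> pos_vec n (\<lambda>j. a (rot n m j))" using mlt good by simp
  next
    fix c assume c: "c < n \<and> pos_vec n (\<lambda>j. a (rot n c j))"
    show "c = m"
    proof (rule ccontr)
      assume "c \<noteq> m"
      then consider "c < m" | "m < c" by linarith
      then show False
      proof cases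
        case 1 then show False using uniq[of c m] c mlt good by blast
      next
        case 2 then show False using uniq[of m c] c mlt good by blast
      qed
    qed
  qed
qed

theorem mainTheorem13:
  fixes n :: nat and lam :: "nat \<Rightarrow> real"
  assumes "(\<Sum>i=1..n. lam i) > 0"
    and "\<not> (\<exists>I1 I2. I1 \<noteq> {} \<and> I2 \<noteq> {} \<and> I1 \<union> I2 = {1..n} \<and> I1 \<inter> I2 = {}
               \<and> s_sum I1 lam > 0 \<and> s_sum I2 lam > 0)"
  shows "card (S_set n lam) = fact (n - 1)"
proof -
  have n1: "n \<ge> 1" using assms(1) by (cases n) auto
  define Perms where "Perms = {p. p permutes {1..n}}"
  define G where "G = {p. p permutes {1..n} \<and> pos_vec n (\<lambda>j. lam (p j))}"
  have uq: "\<exists>!c. c < n \<and> pos_vec n (\<lambda>j. lam (\<tau> (rot n c j)))" if "\<tau> permutes {1..n}" for \<tau>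
  proof -
    have inj: "inj_on \<tau> J" for J using permutes_inj[OF that] by (simp add: inj_on_def inj_def)
    have im: "\<tau> ` {1..n} = {1..n}" using permutes_image[OF that] .
    have rs: "sum (\<lambda>j. lam (\<tau> j)) J = sum lam (\<tau> ` J)" for J
      using sum.reindex[OF inj, of lam J] by (simp add: o_def)
    have h1: "(\<Sum>j=1..n. lam (\<tau> j)) > 0" using rs[of "{1..n}"] im assms(1) by simp
    have h2: "\<forall>J. J \<subseteq> {1..n} \<longrightarrow> J \<noteq> {} \<longrightarrow> J \<noteq> {1..n} \<longrightarrow>
           \<not> (0 < (\<Sum>j\<in>J. lam (\<tau> j)) \<and> 0 < (\<Sum>j\<in>{1..n} - J. lam (\<tau> j)))"
    proof (intro allI impI notI)
      fix J assume J: "J \<subseteq> {1..n}" "J \<noteq> {}" "J \<noteq> {1..n}"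
        "0 < (\<Sum>j\<in>J. lam (\<tau> j)) \<and> 0 < (\<Sum>j\<in>{1..n} - J. lam (\<tau> j))"
      have f1: "\<tau> ` J \<union> \<tau> ` ({1..n} - J) = {1..n}"
        using J(1) im by (metis Diff_partition image_Un)
      have f2: "\<tau> ` J \<inter> \<tau> ` ({1..n} - J) = {}"
        using permutes_inj[OF that] by (auto simp: inj_def)
      have f3: "\<tau> ` J \<noteq> {}" using J(2) by simp
      have f4: "\<tau> ` ({1..n} - J) \<noteq> {}" using J(1,3) by blast
      have e1: "s_sum (\<tau> ` J) lam = (\<Sum>j\<in>J. lam (\<tau> j))"
        unfolding s_sum_def by (rule rs[symmetric])
      have e2: "s_sum (\<tau> ` ({1..n} - J)) lam = (\<Sum>j\<in>{1..n} - J. lam (\<tau> j))"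
        unfolding s_sum_def by (rule rs[symmetric])
      have f5: "s_sum (\<tau> ` J) lam > 0" using e1 J(4) by linarith
      have f6: "s_sum (\<tau> ` ({1..n} - J)) lam > 0" using e2 J(4) by linarith
      have "\<exists>I1 I2. I1 \<noteq> {} \<and> I2 \<noteq> {} \<and> I1 \<union> I2 = {1..n} \<and> I1 \<inter> I2 = {}
               \<and> s_sum I1 lam > 0 \<and> s_sum I2 lam > 0"
        by (rule exI[of _ "\<tau> ` J"], rule exI[of _ "\<tau> ` ({1..n} - J)"], intro conjI)
          (rule f3, rule f4, rule f1, rule f2, rule f5, rule f6)
      then show False using assms(2) by blast
    qed
    show ?thesis using cycle_lemma[where n=n and a="\<lambda>j. lam (\<tau> j)", OF h1 h2] .
  qed
  define cf where "cf \<tau> = (THE c. c < n \<and> pos_vec n (\<lambda>j. lam (\<tau> (rot n c j))))" for \<tau>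
  have cf: "cf \<tau> < n \<and> pos_vec n (\<lambda>j. lam (\<tau> (rot n (cf \<tau>) j)))" if "\<tau> permutes {1..n}" for \<tau>
    unfolding cf_def using theI'[OF uq[OF that]] .
  have cfu: "cf \<tau> = c" if "\<tau> permutes {1..n}" "c < n" "pos_vec n (\<lambda>j. lam (\<tau> (rot n c j)))" for \<tau> c
    using uq[OF that(1)] cf[OF that(1)] that(2,3) by blast
  have bij1: "bij_betw (\<lambda>\<tau>. (\<tau> \<circ> rot n (cf \<tau>), cf \<tau>)) Perms (G \<times> {0..<n})"
  proof (rule bij_betw_byWitness[where f' = "\<lambda>(\<pi>, c). \<pi> \<circ> inv (rot n c)"])
    show "\<forall>a\<in>Perms. (case (a \<circ> rot n (cf a), cf a) of (\<pi>, c) \<Rightarrow> \<pi> \<circ> inv (rot n c)) = a"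
    proof
      fix a assume "a \<in> Perms"
      then have "cf a < n" using cf[of a] unfolding Perms_def by simp
      then have p: "rot n (cf a) permutes {1..n}" by (rule rot_permutes)
      show "(case (a \<circ> rot n (cf a), cf a) of (\<pi>, c) \<Rightarrow> \<pi> \<circ> inv (rot n c)) = a"
        using permutes_inverses(1)[OF p] by (auto simp: fun_eq_iff)
    qed
    show "\<forall>a'\<in>G \<times> {0..<n}. (\<lambda>\<tau>. (\<tau> \<circ> rot n (cf \<tau>), cf \<tau>)) ((\<lambda>(\<pi>, c). \<pi> \<circ> inv (rot n c)) a') = a'"
    proof
      fix a' assume a': "a' \<in> G \<times> {0..<n}"
      obtain \<pi> c where pc: "a' = (\<pi>, c)" by fastforce
      have c: "c < n" and pi: "\<pi> permutes {1..n}" "pos_vec n (\<lambda>j. lam (\<pi> j))"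
        using a' pc by (auto simp: G_def)
      have r: "rot n c permutes {1..n}" using rot_permutes[OF c] .
      define \<tau> where "\<tau> = \<pi> \<circ> inv (rot n c)"
      have tp: "\<tau> permutes {1..n}" unfolding \<tau>_def
        using permutes_compose[OF permutes_inv[OF r] pi(1)] .
      have tr: "\<tau> \<circ> rot n c = \<pi>"
        unfolding \<tau>_def using permutes_inverses(2)[OF r] by (auto simp: fun_eq_iff)
      have eq: "\<tau> (rot n c j) = \<pi> j" for j
        using tr by (metis comp_apply)
      have "cf \<tau> = c"
        using cfu[OF tp c] pi(2) by (simp add: eq)
      then show "(\<lambda>\<tau>. (\<tau> \<circ> rot n (cf \<tau>), cf \<tau>)) ((\<lambda>(\<pi>, c). \<pi> \<circ> inv (rot n c)) a') = a'"
        using tr pc \<tau>_def by simp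
    qed
    show "(\<lambda>\<tau>. (\<tau> \<circ> rot n (cf \<tau>), cf \<tau>)) ` Perms \<subseteq> G \<times> {0..<n}"
    proof (rule image_subsetI)
      fix \<tau> assume "\<tau> \<in> Perms"
      then have tp: "\<tau> permutes {1..n}" by (simp add: Perms_def)
      have c: "cf \<tau> < n" using cf[OF tp] by simp
      have "\<tau> \<circ> rot n (cf \<tau>) permutes {1..n}" by (rule permutes_compose[OF rot_permutes[OF c] tp])
      then show "(\<tau> \<circ> rot n (cf \<tau>), cf \<tau>) \<in> G \<times> {0..<n}"
        using cf[OF tp] by (simp add: G_def)
    qed
    show "(\<lambda>(\<pi>, c). \<pi> \<circ> inv (rot n c)) ` (G \<times> {0..<n}) \<subseteq> Perms"
    proof (rule image_subsetI)
      fix x assume x: "x \<in> G \<times> {0..<n}"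
      obtain \<pi> c where pc: "x = (\<pi>, c)" by fastforce
      have c: "c < n" and pi: "\<pi> permutes {1..n}" using x pc by (auto simp: G_def)
      have "\<pi> \<circ> inv (rot n c) permutes {1..n}"
        by (rule permutes_compose[OF permutes_inv[OF rot_permutes[OF c]] pi])
      then show "(\<lambda>(\<pi>, c). \<pi> \<circ> inv (rot n c)) x \<in> Perms" using pc by (simp add: Perms_def)
    qed
  qed
  have cP: "card Perms = fact n" unfolding Perms_def by (rule card_permutations) auto
  have finG: "finite G" unfolding G_def
    by (rule finite_subset[OF _ finite_permutations[of "{1..n}"]]) auto
  have "card G * n = fact n"
    using bij_betw_same_card[OF bij1] cP by (simp add: card_cartesian_product)
  then have cG: "card G = fact (n - 1)"
  proof -
    have "fact n = n * (fact (n - 1) :: nat)" using n1 by (simp add: fact_reduce)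
    then show ?thesis using \<open>card G * n = fact n\<close> n1 by simp
  qed
  have bij2: "bij_betw inv (S_set n lam) G"
  proof (rule bij_betw_byWitness[where f' = inv])
    show "\<forall>a\<in>S_set n lam. inv (inv a) = a"
      by (auto simp: S_set_def permutes_bij inv_inv_eq)
    show "\<forall>a'\<in>G. inv (inv a') = a'"
      by (auto simp: G_def permutes_bij inv_inv_eq)
    show "inv ` S_set n lam \<subseteq> G"
      by (auto simp: S_set_def G_def perm_act_def permutes_inv)
    show "inv ` G \<subseteq> S_set n lam"
      by (auto simp: S_set_def G_def perm_act_def permutes_inv permutes_bij inv_inv_eq)
  qed
  show ?thesis using bij_betw_same_card[OF bij2] cG by simp
qed

end
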